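(* For every real number $\nu>0$, the set $\mathbb{L}^{(\nu)}$ of $\nu$-Liouville numbers is uncountable.
   Context: A real number $\xi$ is a Liouville number if there exist a sequence of rational numbers $p_k/q_k$ ($p_k,q_k$ integers, $q_k>1$) and a sequence of positive reals $(\omega_k)_k$ with $\omega_k\to\infty$ such that $0<|\xi-p_k/q_k|<q_k^{-\omega_k}$ for all $k$. For a real number $\xi$, let $S(\xi)$ be the set of real numbers $\nu^*\ge 0$ for which there exist a sequence of rationals $p_k/q_k$ (integers $q_k>1$) and a sequence of positive reals $(\omega_k)_k$ such that $0<|\xi-p_k/q_k|<q_k^{-\omega_k}$ for all $k$ and $\omega_k/q_k^{\nu^*}\to\infty$ as $k\to\infty$. For $\nu\in[0,\infty]$, $\xi$ is called a $\nu$-Liouville number if $\xi$ is a Liouville number and $\sup S(\xi)=\nu$; the set of $\nu$-Liouville numbers is denoted $\mathbb{L}^{(\nu)}$. In particular, $\xi$ is an $\infty$-Liouville number iff $S(\xi)=[0,\infty)$. *)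

theory Defs
  imports "HOL-Analysis.Analysis" "HOL-Library.Extended_Real"
begin

definition approx_seq :: "real \<Rightarrow> (nat \<Rightarrow> int) \<Rightarrow> (nat \<Rightarrow> int) \<Rightarrow> (nat \<Rightarrow> real) \<Rightarrow> bool" where
  "approx_seq \<xi> p q \<omega> \<longleftrightarrow>
     (\<forall>k. q k > 1 \<and> \<omega> k > 0 \<and>
          0 < \<bar>\<xi> - real_of_int (p k) / real_of_int (q k)\<bar> \<and>
          \<bar>\<xi> - real_of_int (p k) / real_of_int (q k)\<bar> < real_of_int (q k) powr (- \<omega> k))"

definition liouville :: "real \<Rightarrow> bool" where
  "liouville \<xi> \<longleftrightarrow> (\<exists>p q \<omega>. approx_seq \<xi> p q \<omega> \<and> filterlim \<omega> at_top sequentially)"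

definition S_set :: "real \<Rightarrow> real set" where
  "S_set \<xi> = {\<nu>. \<nu> \<ge> 0 \<and> (\<exists>p q \<omega>. approx_seq \<xi> p q \<omega> \<and>
       filterlim (\<lambda>k. \<omega> k / real_of_int (q k) powr \<nu>) at_top sequentially)}"

definition nu_liouville :: "ereal \<Rightarrow> real set" where
  "nu_liouville \<nu> = {\<xi>. liouville \<xi> \<and> Sup (ereal ` S_set \<xi>) = \<nu>}"

end

theory Submission
  imports Defs "HOL-Real_Asymp.Real_Asymp"
begin

definition mult :: "real \<Rightarrow> nat \<Rightarrow> nat" where
  "mult v x = nat \<lceil>2 powr (v * real x)\<rceil> + 2"

fun aa :: "real \<Rightarrow> nat \<Rightarrow> nat" where
  "aa v 0 = 4" | "aa v (Suc n) = aa v n * mult v (aa v n)"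

lemma mult_ge: "mult v x \<ge> 3"
proof -
  have "(0::real) < 2 powr (v * real x)" by simp
  hence "\<lceil>2 powr (v * real x)\<rceil> \<ge> 1" by (simp add: one_le_ceiling)  
  thus ?thesis unfolding mult_def by linarith
qed

lemma mult_less: "real (mult v x) < 2 powr (v * real x) + 3"
proof -
  have "(0::real) < 2 powr (v * real x)" by simp
  hence "real (nat \<lceil>2 powr (v * real x)\<rceil>) = real_of_int \<lceil>2 powr (v * real x)\<rceil>" by simp
  moreover have "real_of_int \<lceil>2 powr (v * real x)\<rceil> < 2 powr (v * real x) + 1" by linarith
  ultimately show ?thesis unfolding mult_def by simp
qed

lemma mult_ge2: "real (mult v x) \<ge> 2 powr (v * real x) + 2"
proof -
  have "(0::real) < 2 powr (v * real x)" by simp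
  hence "real (nat \<lceil>2 powr (v * real x)\<rceil>) = real_of_int \<lceil>2 powr (v * real x)\<rceil>" by simp
  moreover have "real_of_int \<lceil>2 powr (v * real x)\<rceil> \<ge> 2 powr (v * real x)" by linarith
  ultimately show ?thesis unfolding mult_def by simp
qed

lemma aa_ge4: "aa v n \<ge> 4"
proof (induction n)
  case (Suc n)
  have "aa v n * 1 \<le> aa v n * mult v (aa v n)" using mult_ge[of v "aa v n"] by (intro mult_le_mono2) simp
  hence "aa v n \<le> aa v (Suc n)" by simp
  thus ?case using Suc by linarith
qed simp

lemma aa_Suc_ge: "aa v (Suc n) \<ge> 3 * aa v n"
  using mult_ge[of v "aa v n"] by simp

lemma aa_Suc_ge2: "aa v (Suc n) \<ge> 2 * aa v n + 4"
  using aa_Suc_ge[of v n] aa_ge4[of v n] by linarith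

lemma aa_add: "aa v (i + j) \<ge> aa v i + j"
proof (induction j)
  case (Suc j) thus ?case using aa_Suc_ge2[of v "i+j"] by simp
qed simp

lemma aa_ge_n: "aa v n \<ge> n"
  using aa_add[of v 0 n] by simp

definition dd :: "nat set \<Rightarrow> nat \<Rightarrow> int" where "dd A n = (if n \<in> A then 3 else 1)"

fun PP :: "real \<Rightarrow> nat set \<Rightarrow> nat \<Rightarrow> int" where
  "PP v A 0 = dd A 0"
| "PP v A (Suc n) = PP v A n * 2 ^ (aa v (Suc n) - aa v n) + dd A (Suc n)"

definition ff :: "real \<Rightarrow> nat set \<Rightarrow> nat \<Rightarrow> real" where
  "ff v A m = real_of_int (dd A m) / 2 ^ aa v m"

definition xi :: "real \<Rightarrow> nat set \<Rightarrow> real" where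
  "xi v A = suminf (ff v A)"

definition TT :: "real \<Rightarrow> nat set \<Rightarrow> nat \<Rightarrow> real" where
  "TT v A n = (\<Sum>m. ff v A (m + Suc n))"

lemma ff_ge: "1 / 2 ^ aa v m \<le> ff v A m"
  unfolding ff_def dd_def by (simp add: divide_right_mono)

lemma ff_pos: "0 < ff v A m"
  unfolding ff_def dd_def by simp

lemma ff_le: "ff v A m \<le> 3 / 2 ^ aa v m"
  unfolding ff_def dd_def by (simp add: divide_right_mono)

lemma ff_le_geo: "ff v A (m + k) \<le> (3 / 2 ^ aa v k) * (1/2) ^ m"
proof -
  have "(2::real) ^ (aa v k + m) \<le> 2 ^ aa v (k + m)"
    using aa_add[of v k m] by (intro power_increasing) auto
  hence "3 / (2::real) ^ aa v (k + m) \<le> 3 / 2 ^ (aa v k + m)"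
    by (intro divide_left_mono) auto
  also have "\<dots> = (3 / 2 ^ aa v k) * (1/2) ^ m"
    by (simp add: power_add power_one_over)
  finally show ?thesis using ff_le[of v A "m + k"] by (simp add: add.commute)
qed

lemma summable_ff: "summable (ff v A)"
proof (rule summable_comparison_test')
  show "summable (\<lambda>m. (3 / 2 ^ aa v 0) * (1/2::real) ^ m)"
    by (intro summable_mult summable_geometric) simp
  fix n :: nat
  show "norm (ff v A n) \<le> (3 / 2 ^ aa v 0) * (1/2::real) ^ n"
    using ff_le_geo[of v A n 0] ff_pos[of v A n] by simp
qed

lemma xi_split: "xi v A = (\<Sum>m\<le>n. ff v A m) + TT v A n"
  unfolding xi_def TT_def
  using suminf_split_initial_segment[OF summable_ff, of v A "Suc n"]
  by (simp add: lessThan_Suc_atMost)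

lemma partial_eq: "(\<Sum>m\<le>n. ff v A m) = real_of_int (PP v A n) / 2 ^ aa v n"
proof (induction n)
  case 0 thus ?case by (simp add: ff_def)
next
  case (Suc n)
  define e where "e = aa v (Suc n) - aa v n"
  have ae: "aa v (Suc n) = aa v n + e" unfolding e_def using aa_Suc_ge[of v n] by (simp del: aa.simps)
  have "(\<Sum>m\<le>Suc n. ff v A m) = real_of_int (PP v A n) / 2 ^ aa v n + ff v A (Suc n)"
    using Suc by simp
  also have "\<dots> = real_of_int (PP v A (Suc n)) / 2 ^ aa v (Suc n)"
    unfolding ff_def ae by (simp del: aa.simps add: e_def[symmetric] power_add field_simps)
  finally show ?case .
qed

lemma PP_odd: "odd (PP v A n)"
proof (induction n)
  case 0 thus ?case by (simp add: dd_def)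
next
  case (Suc n)
  have "aa v (Suc n) - aa v n \<noteq> 0" using aa_Suc_ge[of v n] aa_ge4[of v n] by simp
  hence "even ((2::int) ^ (aa v (Suc n) - aa v n))" by simp
  thus ?case by (simp add: dd_def)
qed

lemma summable_tail: "summable (\<lambda>m. ff v A (m + k))"
  by (rule summable_ignore_initial_segment[OF summable_ff])

lemma TT_ge: "1 / 2 ^ aa v (Suc n) \<le> TT v A n"
proof -
  have "sum (\<lambda>m. ff v A (m + Suc n)) {0} \<le> TT v A n"
    unfolding TT_def by (rule sum_le_suminf[OF summable_tail]) (auto intro: less_imp_le ff_pos)
  thus ?thesis using ff_ge[of v "Suc n" A] by simp
qed

lemma TT_le: "TT v A n \<le> 6 / 2 ^ aa v (Suc n)"
proof -
  have "TT v A n \<le> (\<Sum>m. (3 / 2 ^ aa v (Suc n)) * (1/2::real) ^ m)"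
    unfolding TT_def
    by (rule suminf_le[OF ff_le_geo summable_tail]) (intro summable_mult summable_geometric, simp)
  also have "\<dots> = 6 / 2 ^ aa v (Suc n)"
    by (subst suminf_mult) (auto simp: suminf_geometric)
  finally show ?thesis .
qed


lemma denom_ge:
  assumes q: "q > 0" and eq: "real_of_int p / real_of_int q = real_of_int (PP v A m) / 2 ^ aa v m"
  shows "2 ^ aa v m \<le> q"
proof -
  have "real_of_int (p * 2 ^ aa v m) = real_of_int (PP v A m * q)"
    using eq q by (simp add: field_simps)
  hence e: "p * 2 ^ aa v m = PP v A m * q" by (simp only: of_int_eq_iff)
  hence "(2::int) ^ aa v m dvd PP v A m * q" by (metis dvd_triv_right)
  moreover have "coprime ((2::int) ^ aa v m) (PP v A m)" using PP_odd[of v A m] by simp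
  ultimately have "(2::int) ^ aa v m dvd q" using coprime_dvd_mult_right_iff coprime_dvd_mult_left_iff by blast
  thus ?thesis using q by (rule zdvd_imp_le)
qed

lemma pow2_powr: "((2::real) ^ k) powr x = 2 powr (real k * x)"
proof -
  have "(2::real) ^ k = 2 powr real k" by (simp add: powr_realpow)
  thus ?thesis by (simp add: powr_powr)
qed

lemma inv_pow2: "1 / (2::real) ^ k = 2 powr (- real k)"
  by (simp add: powr_minus powr_realpow divide_inverse)

lemma TT_pos: "0 < TT v A n"
  using TT_ge[of v n A] by (smt (verit) divide_pos_pos zero_less_power)

lemma mult_bound:
  assumes v: "v \<ge> 0" and le: "(2::real) ^ k \<le> y"
  shows "real (mult v k) < y powr v + 3"
proof -
  have "2 powr (v * real k) = ((2::real) ^ k) powr v" by (simp add: pow2_powr mult.commute)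
  also have "\<dots> \<le> y powr v" by (rule powr_mono2) (use v le in auto)
  finally show ?thesis using mult_less[of v k] by linarith
qed

lemma caseA:
  assumes v: "v \<ge> 0" and q: "q > 1"
    and eq: "real_of_int p / real_of_int q = real_of_int (PP v A m) / 2 ^ aa v m"
    and lt: "\<bar>xi v A - real_of_int p / real_of_int q\<bar> < real_of_int q powr (- \<omega>)"
  shows "\<omega> < real_of_int q powr v + 6"
proof (cases "\<omega> \<ge> 0")
  case False
  have "0 \<le> real_of_int q powr v" by simp
  thus ?thesis using False by linarith
next
  case True
  have "2 ^ aa v m \<le> q" using denom_ge[of q p v A m] q eq by simp
  hence Qq: "(2::real) ^ aa v m \<le> real_of_int q"
    by (metis of_int_le_iff of_int_numeral of_int_power)
  have "xi v A - real_of_int p / real_of_int q = TT v A m"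
    using xi_split[of v A m] partial_eq[of v A m] eq by simp
  hence abs_eq: "\<bar>xi v A - real_of_int p / real_of_int q\<bar> = TT v A m" using TT_pos[of v A m] by simp
  have "2 powr (- real (aa v (Suc m))) \<le> TT v A m" using TT_ge[of v m A] inv_pow2 by metis
  also have "\<dots> < real_of_int q powr (- \<omega>)" using lt abs_eq by simp
  also have "\<dots> \<le> ((2::real) ^ aa v m) powr (- \<omega>)"
    by (rule powr_mono2') (use True Qq in auto)
  also have "\<dots> = 2 powr (real (aa v m) * (- \<omega>))" by (rule pow2_powr)
  finally have "- real (aa v (Suc m)) < real (aa v m) * (- \<omega>)" by simp
  hence "real (aa v m) * \<omega> < real (aa v m) * real (mult v (aa v m))" by simp
  moreover have "real (aa v m) > 0" using aa_ge4[of v m] by simp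
  ultimately have "\<omega> < real (mult v (aa v m))" by simp
  also have "\<dots> < real_of_int q powr v + 3" by (rule mult_bound[OF v Qq])
  finally show ?thesis by simp
qed


lemma abs_aux: "(e::real) \<le> \<bar>a - b\<bar> \<Longrightarrow> T \<le> f \<Longrightarrow> y = b + T \<Longrightarrow> 0 < T \<Longrightarrow> e - f \<le> \<bar>y - a\<bar>"
  by linarith

lemma caseB_key:
  assumes q: "q > 1"
    and neq: "\<And>m. real_of_int p / real_of_int q \<noteq> real_of_int (PP v A m) / 2 ^ aa v m"
    and qle: "real_of_int q \<le> 2 ^ aa v n"
  shows "1 / (2 * real_of_int q * 2 ^ aa v n) \<le> \<bar>xi v A - real_of_int p / real_of_int q\<bar>"
proof -
  define Q where "Q = (2::real) ^ aa v n"
  define x where "x = real_of_int q"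
  have x2: "x \<ge> 2" using q unfolding x_def by simp
  have Qx: "x \<le> Q" using qle unfolding Q_def x_def .
  have "(2::real) ^ (2 * aa v n + 4) \<le> 2 ^ aa v (Suc n)"
    by (rule power_increasing) (use aa_Suc_ge2[of v n] in auto)
  moreover have "(2::real) ^ (2 * aa v n + 4) = 16 * Q^2"
    unfolding Q_def by (simp del: aa.simps add: power_add power_even_eq)
  ultimately have Q1: "16 * Q^2 \<le> 2 ^ aa v (Suc n)" by simp
  define z where "z = p * 2 ^ aa v n - PP v A n * q"
  have zeq: "real_of_int p / x - real_of_int (PP v A n) / Q = real_of_int z / (x * Q)"
    unfolding z_def x_def Q_def using x2 unfolding x_def by (simp add: field_simps)
  have "z \<noteq> 0"
  proof
    assume "z = 0"
    hence "real_of_int p / x - real_of_int (PP v A n) / Q = 0" using zeq by simp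
    thus False using neq[of n] unfolding x_def Q_def by simp
  qed
  hence z1: "1 \<le> \<bar>real_of_int z\<bar>" by linarith
  have xQ: "x * Q > 0" using x2 Qx by simp
  have d1: "1 / (x * Q) \<le> \<bar>real_of_int p / x - real_of_int (PP v A n) / Q\<bar>"
    unfolding zeq using z1 xQ by (simp add: abs_div divide_right_mono)
  have "TT v A n \<le> 6 / 2 ^ aa v (Suc n)" by (rule TT_le)
  also have "\<dots> \<le> 6 / (16 * Q^2)"
    by (rule divide_left_mono) (use Q1 xQ Qx x2 in auto)
  also have "\<dots> \<le> 6 / (16 * (x * Q))"
    by (rule divide_left_mono) (use Qx xQ x2 in \<open>auto simp: power2_eq_square intro: mult_right_mono\<close>)
  finally have tt: "TT v A n \<le> 6 / (16 * (x * Q))" .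
  have xs: "xi v A = real_of_int (PP v A n) / Q + TT v A n"
    using xi_split[of v A n] partial_eq[of v A n] unfolding Q_def by simp
  have "1 / (x * Q) - 6 / (16 * (x * Q)) \<le> \<bar>xi v A - real_of_int p / x\<bar>"
    by (rule abs_aux[OF d1 tt xs TT_pos])
  moreover have "1 / (2 * x * Q) \<le> 1 / (x * Q) - 6 / (16 * (x * Q))"
    using xQ by (simp add: field_simps)
  ultimately show ?thesis unfolding x_def Q_def by linarith
qed


lemma caseB:
  assumes v: "v \<ge> 0" and q: "q > 1"
    and neq: "\<And>m. real_of_int p / real_of_int q \<noteq> real_of_int (PP v A m) / 2 ^ aa v m"
    and lt: "\<bar>xi v A - real_of_int p / real_of_int q\<bar> < real_of_int q powr (- \<omega>)"
  shows "\<omega> < real_of_int q powr v + 6"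
proof -
  define x where "x = real_of_int q"
  have x2: "x \<ge> 2" using q unfolding x_def by simp
  define n where "n = (LEAST n. x \<le> 2 ^ aa v n)"
  have "nat q < 2 ^ nat q" by (rule less_exp)
  also have "(2::nat) ^ nat q \<le> 2 ^ aa v (nat q)" by (rule power_increasing) (use aa_ge_n in auto)
  finally have "real (nat q) < real ((2::nat) ^ aa v (nat q))" by linarith
  hence "x \<le> 2 ^ aa v (nat q)" unfolding x_def using q by simp
  hence qle: "x \<le> 2 ^ aa v n" unfolding n_def by (rule LeastI)
  define Q where "Q = (2::real) ^ aa v n"
  have "1 / (2 * x * Q) < x powr (- \<omega>)"
    using caseB_key[OF q neq, of n] qle lt unfolding x_def Q_def by linarith
  also have "\<dots> = 1 / x powr \<omega>" by (simp add: powr_minus divide_inverse)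
  finally have "1 / (2 * x * Q) < 1 / x powr \<omega>" .
  moreover have "x powr \<omega> > 0" using x2 by simp
  moreover have "2 * x * Q > 0" using x2 unfolding Q_def by simp
  ultimately have main: "x powr \<omega> < 2 * x * Q" by (simp add: divide_simps)
  show ?thesis
  proof (cases n)
    case 0
    have "x ^ 5 \<ge> 2 ^ 5" by (rule power_mono) (use x2 in auto)
    have "2 * x * Q = 32 * x" unfolding Q_def 0 by simp
    also have "\<dots> \<le> x ^ 5 * x" by (rule mult_right_mono) (use \<open>x ^ 5 \<ge> 2 ^ 5\<close> x2 in auto)
    also have "\<dots> = x ^ 6" by (simp add: power_Suc2[symmetric])
    also have "\<dots> = x powr real (6::nat)" using x2 by (simp add: powr_realpow)
    finally have "x powr \<omega> < x powr real (6::nat)" using main by linarith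
    hence "\<omega> < real (6::nat)" using powr_less_cancel_iff[of x] x2 by (smt (verit))
    moreover have "0 \<le> real_of_int q powr v" by simp
    ultimately show ?thesis by linarith
  next
    case (Suc k)
    have "\<not> x \<le> 2 ^ aa v k" unfolding n_def[symmetric] using Suc n_def not_less_Least by (metis lessI)
    hence kx: "(2::real) ^ aa v k \<le> x" by simp
    define M where "M = mult v (aa v k)"
    have "Q = ((2::real) ^ aa v k) ^ M" unfolding Q_def Suc M_def by (simp add: power_mult)
    also have "\<dots> \<le> x ^ M" by (rule power_mono) (use kx in auto)
    finally have QM: "Q \<le> x ^ M" .
    have "2 * x * Q \<le> x * x * x ^ M"
    proof (rule mult_mono)
      show "2 * x \<le> x * x" using x2 by (intro mult_right_mono) auto
      show "Q \<le> x ^ M" by (rule QM)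
      show "0 \<le> x * x" using x2 by simp
      show "0 \<le> Q" unfolding Q_def by simp
    qed
    also have "\<dots> = x ^ (M + 2)" by (simp add: power_add power2_eq_square)
    also have "\<dots> = x powr real (M + 2)" using x2 by (simp only: powr_realpow)
    finally have "x powr \<omega> < x powr real (M + 2)" using main by linarith
    hence "\<omega> < real (M + 2)" using powr_less_cancel_iff[of x] x2 by (smt (verit))
    moreover have "real M < x powr v + 3" unfolding M_def by (rule mult_bound[OF v kx])
    ultimately show ?thesis unfolding x_def by linarith
  qed
qed

lemma bound:
  assumes v: "v \<ge> 0" and q: "q > 1"
    and lt: "\<bar>xi v A - real_of_int p / real_of_int q\<bar> < real_of_int q powr (- \<omega>)"
  shows "\<omega> < real_of_int q powr v + 6"
proof (cases "\<exists>m. real_of_int p / real_of_int q = real_of_int (PP v A m) / 2 ^ aa v m")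
  case True
  then obtain m where "real_of_int p / real_of_int q = real_of_int (PP v A m) / 2 ^ aa v m" by blast
  thus ?thesis using caseA[OF v q _ lt] by blast
next
  case False
  thus ?thesis using caseB[OF v q _ lt] by blast
qed


lemma S_upper:
  assumes v: "v \<ge> 0" and t: "t \<in> S_set (xi v A)"
  shows "t \<le> v"
proof (rule ccontr)
  assume "\<not> t \<le> v"
  hence tv: "v < t" by simp
  from t obtain p q \<omega> where ap: "approx_seq (xi v A) p q \<omega>"
    and lim: "filterlim (\<lambda>k. \<omega> k / real_of_int (q k) powr t) at_top sequentially"
    unfolding S_set_def by blast
  have small: "\<omega> k / real_of_int (q k) powr t < 7" for k
  proof -
    have q1: "q k > 1" and lt: "\<bar>xi v A - real_of_int (p k) / real_of_int (q k)\<bar> < real_of_int (q k) powr (- \<omega> k)"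
      using ap unfolding approx_seq_def by auto
    have w: "\<omega> k < real_of_int (q k) powr v + 6" by (rule bound[OF v q1 lt])
    define Y where "Y = real_of_int (q k) powr t"
    have "real_of_int (q k) powr v \<le> Y" unfolding Y_def
      by (rule powr_mono) (use tv q1 in auto)
    moreover have "1 \<le> Y" unfolding Y_def using q1 tv v by (intro ge_one_powr_ge_zero) auto
    ultimately have "\<omega> k < 7 * Y" using w by linarith
    thus ?thesis unfolding Y_def[symmetric] using \<open>1 \<le> Y\<close> by (simp add: divide_simps)
  qed
  have "eventually (\<lambda>k. 7 < \<omega> k / real_of_int (q k) powr t) sequentially"
    using lim by (simp add: filterlim_at_top_dense)
  then obtain k where "7 < \<omega> k / real_of_int (q k) powr t" by (auto simp: eventually_sequentially)
  thus False using small[of k] by simp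
qed

lemma powr_at_top: "c > 0 \<Longrightarrow> filterlim (\<lambda>y::real. 2 powr (c * y)) at_top at_top"
  by real_asymp

lemma aa_at_top: "filterlim (\<lambda>k. real (aa v k)) at_top sequentially"
  by (rule filterlim_at_top_mono[OF filterlim_real_sequentially]) (use aa_ge_n in auto)

definition om :: "real \<Rightarrow> nat \<Rightarrow> real" where
  "om v k = (real (aa v (Suc k)) - 3) / real (aa v k)"

lemma approx_xi: "approx_seq (xi v A) (PP v A) (\<lambda>k. 2 ^ aa v k) (om v)"
  unfolding approx_seq_def
proof (intro allI conjI)
  fix k
  have a4: "aa v k \<ge> 4" by (rule aa_ge4)
  have "(2::int) ^ 1 < 2 ^ aa v k" by (rule power_strict_increasing) (use a4 in auto)
  thus "(1::int) < 2 ^ aa v k" by simp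
  have "real (aa v (Suc k)) \<ge> 3 * real (aa v k)" using aa_Suc_ge[of v k] by linarith
  hence "real (aa v (Suc k)) - 3 > 0" using a4 by linarith
  thus "0 < om v k" unfolding om_def using a4 by (intro divide_pos_pos) auto
  have eq: "xi v A - real_of_int (PP v A k) / real_of_int (2 ^ aa v k) = TT v A k"
    using xi_split[of v A k] partial_eq[of v A k] by simp
  show "0 < \<bar>xi v A - real_of_int (PP v A k) / real_of_int (2 ^ aa v k)\<bar>"
    unfolding eq using TT_pos[of v A k] by simp
  have "TT v A k \<le> 6 / 2 ^ aa v (Suc k)" by (rule TT_le)
  also have "\<dots> < 8 / 2 ^ aa v (Suc k)" by (simp add: divide_strict_right_mono)
  also have "\<dots> = 2 powr (- (real (aa v (Suc k)) - 3))"
  proof -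
    have "8 / (2::real) ^ aa v (Suc k) = 2 powr 3 * (1 / 2 ^ aa v (Suc k))" by simp
    also have "\<dots> = 2 powr 3 * 2 powr (- real (aa v (Suc k)))" by (simp only: inv_pow2)
    also have "\<dots> = 2 powr (3 + - real (aa v (Suc k)))" by (rule powr_add[symmetric])
    also have "\<dots> = 2 powr (- (real (aa v (Suc k)) - 3))" by (simp del: aa.simps)
    finally show ?thesis .
  qed
  also have "\<dots> = ((2::real) ^ aa v k) powr (- om v k)"
    unfolding pow2_powr om_def using a4 by simp
  finally show "\<bar>xi v A - real_of_int (PP v A k) / real_of_int (2 ^ aa v k)\<bar>
      < real_of_int (2 ^ aa v k) powr (- om v k)"
    unfolding eq using TT_pos[of v A k] by simp
qed

lemma S_lower_lim:
  assumes v: "v > 0" and t: "0 \<le> t" "t < v"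
  shows "filterlim (\<lambda>k. om v k / real_of_int (2 ^ aa v k) powr t) at_top sequentially"
proof -
  have lb: "2 powr ((v - t) * real (aa v k)) \<le> om v k / real_of_int (2 ^ aa v k) powr t" for k
  proof -
    have a4: "real (aa v k) \<ge> 4" using aa_ge4[of v k] by linarith
    have eqom: "om v k = real (mult v (aa v k)) - 3 / real (aa v k)"
      unfolding om_def using a4 by (simp add: divide_simps)
    have "3 / real (aa v k) \<le> 1" using a4 by simp
    hence "om v k \<ge> 2 powr (v * real (aa v k))" using eqom mult_ge2[of v "aa v k"] by linarith
    moreover have "real_of_int (2 ^ aa v k) powr t = 2 powr (real (aa v k) * t)"
      using pow2_powr by simp
    moreover have "2 powr ((v - t) * real (aa v k)) * 2 powr (real (aa v k) * t) = 2 powr (v * real (aa v k))"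
      by (simp add: powr_add[symmetric] algebra_simps)
    ultimately show ?thesis by (simp add: divide_simps)
  qed
  have "filterlim (\<lambda>k. 2 powr ((v - t) * real (aa v k))) at_top sequentially"
    by (rule filterlim_compose[OF powr_at_top aa_at_top]) (use t in simp)
  thus "filterlim (\<lambda>k. om v k / real_of_int (2 ^ aa v k) powr t) at_top sequentially"
    by (rule filterlim_at_top_mono) (use lb in auto)
qed

lemma S_lower:
  assumes v: "v > 0" and t: "0 \<le> t" "t < v"
  shows "t \<in> S_set (xi v A)"
  unfolding S_set_def using t approx_xi S_lower_lim[OF v t] by blast


lemma liouville_xi:
  assumes v: "v > 0"
  shows "liouville (xi v A)"
proof -
  have "filterlim (\<lambda>k. om v k / real_of_int (2 ^ aa v k) powr 0) at_top sequentially"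
    using S_lower_lim[OF v, of 0] v by simp
  hence "filterlim (om v) at_top sequentially" by simp
  thus ?thesis unfolding liouville_def using approx_xi by blast
qed

lemma Sup_S:
  assumes v: "v > 0"
  shows "Sup (ereal ` S_set (xi v A)) = ereal v"
proof (rule antisym)
  show "Sup (ereal ` S_set (xi v A)) \<le> ereal v"
    by (rule Sup_least) (use S_upper v in auto)
  show "ereal v \<le> Sup (ereal ` S_set (xi v A))"
  proof (rule dense_le)
    fix y assume y: "y < ereal v"
    have z: "ereal 0 \<le> Sup (ereal ` S_set (xi v A))"
      by (rule Sup_upper) (use S_lower[OF v, of 0] v in auto)
    show "y \<le> Sup (ereal ` S_set (xi v A))"
    proof (cases y)
      case (real r)
      show ?thesis
      proof (cases "r < 0")
        case True thus ?thesis using z real by (meson ereal_less_eq(3) less_imp_le order_trans)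
      next
        case False
        hence "r \<in> S_set (xi v A)" using S_lower[OF v, of r] y real by auto
        thus ?thesis unfolding real by (intro Sup_upper) auto
      qed
    qed (use y in auto)
  qed
qed


lemma xi_inj: "inj (xi v)"
proof (rule injI, rule ccontr)
  fix A B assume eq: "xi v A = xi v B" and ne: "A \<noteq> B"
  have "\<exists>n. (n \<in> A) \<noteq> (n \<in> B)" using ne by blast
  define n where "n = (LEAST n. (n \<in> A) \<noteq> (n \<in> B))"
  have nd: "(n \<in> A) \<noteq> (n \<in> B)" unfolding n_def by (rule LeastI_ex) fact
  have same: "ff v A m = ff v B m" if "m < n" for m
  proof -
    have "\<not> ((m \<in> A) \<noteq> (m \<in> B))" using not_less_Least[OF that[unfolded n_def]] .
    thus ?thesis unfolding ff_def dd_def by simp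
  qed
  have "(\<Sum>m<n. ff v A m) = (\<Sum>m<n. ff v B m)" by (rule sum.cong) (auto intro: same)
  hence sd: "(\<Sum>m\<le>n. ff v A m) - (\<Sum>m\<le>n. ff v B m) = ff v A n - ff v B n"
    by (simp add: lessThan_Suc_atMost[symmetric])
  define Q where "Q = (2::real) ^ aa v n"
  have Qp: "Q > 0" unfolding Q_def by simp
  have d: "\<bar>ff v A n - ff v B n\<bar> = 2 / Q" unfolding ff_def dd_def Q_def using nd
    by (auto simp: divide_simps)
  have "(2::real) ^ (aa v n + 4) \<le> 2 ^ aa v (Suc n)"
    by (rule power_increasing) (use aa_Suc_ge2[of v n] in auto)
  hence Q1: "16 * Q \<le> 2 ^ aa v (Suc n)" unfolding Q_def by (simp del: aa.simps add: power_add)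
  have "0 = (ff v A n - ff v B n) + (TT v A n - TT v B n)"
    using eq xi_split[of v A n] xi_split[of v B n] sd by linarith
  hence "2 / Q \<le> \<bar>TT v A n - TT v B n\<bar>" using d by linarith
  also have "\<dots> \<le> 6 / 2 ^ aa v (Suc n) - 1 / 2 ^ aa v (Suc n)"
    using TT_le[of v A n] TT_le[of v B n] TT_ge[of v n A] TT_ge[of v n B] by linarith
  also have "\<dots> = 5 / 2 ^ aa v (Suc n)" by (simp only: diff_divide_distrib[symmetric]) simp
  also have "\<dots> \<le> 5 / (16 * Q)" by (rule divide_left_mono) (use Q1 Qp in auto)
  finally have "2 / Q \<le> 5 / (16 * Q)" .
  thus False using Qp by (simp add: divide_simps)
qed

lemma uncountable_nat_sets: "uncountable (UNIV :: nat set set)"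
  unfolding uncountable_def
proof (rule conjI)
  show "(UNIV :: nat set set) \<noteq> {}" by simp
  show "\<not> (\<exists>f::nat \<Rightarrow> nat set. range f = UNIV)"
  proof
  assume "\<exists>f::nat \<Rightarrow> nat set. range f = UNIV"
  then obtain f :: "nat \<Rightarrow> nat set" where f: "range f = UNIV" by blast
  then obtain m where "{n. n \<notin> f n} = f m" by (metis UNIV_I imageE)
  thus False by blast
  qed
qed

theorem theorem1:
  fixes \<nu> :: real
  assumes "\<nu> > 0"
  shows "uncountable (nu_liouville (ereal \<nu>))"
proof
  assume c: "countable (nu_liouville (ereal \<nu>))"
  have "range (xi \<nu>) \<subseteq> nu_liouville (ereal \<nu>)"
    unfolding nu_liouville_def using liouville_xi[OF assms] Sup_S[OF assms] by auto
  hence "countable (range (xi \<nu>))" using c countable_subset by blast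
  hence "countable (UNIV :: nat set set)" using countable_image_inj_on xi_inj by blast
  thus False using uncountable_nat_sets by blast
qed

end
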